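(* Let $X$ be a locally connected topological space. Then the functor $U\mapsto\pi_0(U)$ (the set of connected components of $U$) is a terminal object of the category of cosheaves of sets on $X$.
   Context: $\mathfrak{Off}(X)$ is the poset of open subsets of $X$ viewed as a category; for $V\subseteq U$ open, $\pi_0(V)\to\pi_0(U)$ sends a component of $V$ to the component of $U$ containing it. A functor $G:\mathfrak{Off}(X)\to\mathbf{Sets}$ is a cosheaf if for every open $U$ and every open covering $U=\bigcup_iU_i$, the map $\coprod_iG(U_i)\to G(U)$ exhibits $G(U)$ as the coequaliser of the two maps $\coprod_{i,j}G(U_i\cap U_j)\rightrightarrows\coprod_iG(U_i)$ induced by the inclusions. The category of cosheaves of sets on $X$ has as morphisms the natural transformations. *)

theory Defs
  imports "HOL-Analysis.Analysis"
begin

definition copresheaf_on :: "'a topology \<Rightarrow> ('a set \<Rightarrow> 'b set) \<Rightarrow> ('a set \<Rightarrow> 'a set \<Rightarrow> 'b \<Rightarrow> 'b) \<Rightarrow> bool" where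
  "copresheaf_on X G Gm \<longleftrightarrow>
     (\<forall>U V. openin X U \<and> openin X V \<and> V \<subseteq> U \<longrightarrow> Gm V U \<in> G V \<rightarrow> G U) \<and>
     (\<forall>U. openin X U \<longrightarrow> (\<forall>s\<in>G U. Gm U U s = s)) \<and>
     (\<forall>U V W. openin X U \<and> openin X V \<and> openin X W \<and> W \<subseteq> V \<and> V \<subseteq> U \<longrightarrow>
        (\<forall>s\<in>G W. Gm V U (Gm W V s) = Gm W U s))"

definition is_set_coequaliser :: "'x set \<Rightarrow> 'y set \<Rightarrow> ('x \<Rightarrow> 'y) \<Rightarrow> ('x \<Rightarrow> 'y) \<Rightarrow> 'z set \<Rightarrow> ('y \<Rightarrow> 'z) \<Rightarrow> bool" where
  "is_set_coequaliser A B f g C q \<longleftrightarrow>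
     f \<in> A \<rightarrow> B \<and> g \<in> A \<rightarrow> B \<and> q ` B = C \<and>
     (\<forall>b\<in>B. \<forall>b'\<in>B. q b = q b' \<longleftrightarrow>
        (b, b') \<in> ({(f a, g a) | a. a \<in> A} \<union> {(g a, f a) | a. a \<in> A})\<^sup>*)"

text \<open>Cosheaf condition for every open U and every open covering \<U> of U
  (coverings indexed by the set of their members; coproducts are dependent sums).\<close>
definition is_cosheaf :: "'a topology \<Rightarrow> ('a set \<Rightarrow> 'b set) \<Rightarrow> ('a set \<Rightarrow> 'a set \<Rightarrow> 'b \<Rightarrow> 'b) \<Rightarrow> bool" where
  "is_cosheaf X G Gm \<longleftrightarrow> copresheaf_on X G Gm \<and>
     (\<forall>U \<U>. openin X U \<and> (\<forall>V\<in>\<U>. openin X V) \<and> \<Union>\<U> = U \<longrightarrow>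
        is_set_coequaliser
          (SIGMA p:\<U> \<times> \<U>. G (fst p \<inter> snd p))
          (SIGMA V:\<U>. G V)
          (\<lambda>(p, s). (fst p, Gm (fst p \<inter> snd p) (fst p) s))
          (\<lambda>(p, s). (snd p, Gm (fst p \<inter> snd p) (snd p) s))
          (G U)
          (\<lambda>(V, s). Gm V U s))"

definition nat_trans_on :: "'a topology \<Rightarrow> ('a set \<Rightarrow> 'b set) \<Rightarrow> ('a set \<Rightarrow> 'a set \<Rightarrow> 'b \<Rightarrow> 'b)
    \<Rightarrow> ('a set \<Rightarrow> 'c set) \<Rightarrow> ('a set \<Rightarrow> 'a set \<Rightarrow> 'c \<Rightarrow> 'c) \<Rightarrow> ('a set \<Rightarrow> 'b \<Rightarrow> 'c) \<Rightarrow> bool" where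
  "nat_trans_on X G Gm H Hm \<eta> \<longleftrightarrow>
     (\<forall>U. openin X U \<longrightarrow> \<eta> U \<in> G U \<rightarrow> H U) \<and>
     (\<forall>U V. openin X U \<and> openin X V \<and> V \<subseteq> U \<longrightarrow>
        (\<forall>s\<in>G V. \<eta> U (Gm V U s) = Hm V U (\<eta> V s)))"

definition pi0 :: "'a topology \<Rightarrow> 'a set \<Rightarrow> 'a set set" where
  "pi0 X U = connected_components_of (subtopology X U)"

definition pi0_map :: "'a topology \<Rightarrow> 'a set \<Rightarrow> 'a set \<Rightarrow> 'a set \<Rightarrow> 'a set" where
  "pi0_map X V U C = (THE D. D \<in> pi0 X U \<and> C \<subseteq> D)"

end

theory Submission
  imports Defs
begin


lemma pi0_basic:
  assumes "openin X U" "C \<in> pi0 X U"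
  shows "C \<noteq> {} \<and> C \<subseteq> U \<and> connectedin X C"
proof -
  have "C \<subseteq> topspace (subtopology X U)"
    using assms(2) connected_components_of_subset pi0_def by metis
  moreover have "connectedin (subtopology X U) C"
    using assms(2) connectedin_connected_components_of pi0_def by metis
  ultimately show ?thesis
    using assms(2) nonempty_connected_components_of[of C] unfolding pi0_def
    by (auto simp: connectedin_subtopology)
qed

lemma pi0_open:
  "locally_connected_space X \<Longrightarrow> openin X U \<Longrightarrow> C \<in> pi0 X U \<Longrightarrow> openin X C"
  unfolding pi0_def using locally_connected_space_open_connected_components by blast

lemma pi0_exists:
  assumes "openin X U" "x \<in> U"
  shows "connected_component_of_set (subtopology X U) x \<in> pi0 X U \<and>
         x \<in> connected_component_of_set (subtopology X U) x"
proof -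
  have "x \<in> topspace (subtopology X U)"
    using assms openin_subset by fastforce
  then show ?thesis
    unfolding pi0_def
    by (simp add: connected_component_in_connected_components_of connected_component_of_refl)
qed

lemma pi0_max:
  assumes "D \<in> pi0 X U" "connectedin X S" "S \<subseteq> U" "S \<inter> D \<noteq> {}"
  shows "S \<subseteq> D"
  using assms connected_components_of_maximal[of D "subtopology X U" S]
  unfolding pi0_def by (auto simp: connectedin_subtopology disjnt_def)

lemma pi0_map_eq:
  assumes "D \<in> pi0 X U" "C \<subseteq> D" "C \<noteq> {}"
  shows "pi0_map X V U C = D"
  unfolding pi0_map_def
proof (rule the_equality)
  show "D \<in> pi0 X U \<and> C \<subseteq> D" using assms by blast
  fix D' assume "D' \<in> pi0 X U \<and> C \<subseteq> D'"
  then have "D' \<inter> D \<noteq> {}" using assms by blast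
  then show "D' = D"
    using connected_components_of_overlap assms \<open>D' \<in> pi0 X U \<and> C \<subseteq> D'\<close> unfolding pi0_def by blast
qed

lemma pi0_map_in:
  assumes "openin X U" "connectedin X C" "C \<noteq> {}" "C \<subseteq> U"
  shows "pi0_map X V U C \<in> pi0 X U \<and> C \<subseteq> pi0_map X V U C"
proof -
  obtain x where x: "x \<in> C" using assms(3) by blast
  have xU: "x \<in> U" using x assms(4) by (rule rev_subsetD)
  define D where "D = connected_component_of_set (subtopology X U) x"
  have D1: "D \<in> pi0 X U" and D2: "x \<in> D" using pi0_exists[OF assms(1) xU] unfolding D_def by simp_all
  have ne: "C \<inter> D \<noteq> {}" using x D2 by blast
  have CD: "C \<subseteq> D" by (rule pi0_max[OF D1 assms(2) assms(4) ne])
  have "pi0_map X V U C = D" by (rule pi0_map_eq[OF D1 CD assms(3)])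
  then show ?thesis using D1 CD by simp
qed

lemma pi0_self:
  assumes "connectedin X C" "C \<noteq> {}"
  shows "pi0 X C = {C}"
proof -
  have C: "C \<subseteq> topspace X \<and> connected_space (subtopology X C)"
    using assms(1) unfolding connectedin_def .
  have ts: "topspace (subtopology X C) = C" using C by (simp add: Int_absorb1)
  have nt: "subtopology X C \<noteq> trivial_topology"
    using ts assms(2) null_topspace_iff_trivial by metis
  show ?thesis unfolding pi0_def
    using connected_components_of_eq_singleton[of "subtopology X C" C] C nt ts by simp
qed



lemma pi0_copre: "copresheaf_on X (pi0 X) (pi0_map X)"
  unfolding copresheaf_on_def
proof (intro conjI allI impI ballI)
  fix U V assume "openin X U \<and> openin X V \<and> V \<subseteq> U"
  then show "pi0_map X V U \<in> pi0 X V \<rightarrow> pi0 X U"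
  proof (intro Pi_I)
    fix C assume a: "openin X U \<and> openin X V \<and> V \<subseteq> U" and C: "C \<in> pi0 X V"
    have Cb: "C \<noteq> {}" "C \<subseteq> V" "connectedin X C" using pi0_basic[OF _ C] a by blast+
    have "C \<subseteq> U" using Cb(2) a by blast
    then show "pi0_map X V U C \<in> pi0 X U" using pi0_map_in[of X U C V] a Cb by blast
  qed
next
  fix U s assume "openin X U" "s \<in> pi0 X U"
  then show "pi0_map X U U s = s" using pi0_map_eq pi0_basic by blast
next
  fix U V W s assume a: "openin X U \<and> openin X V \<and> openin X W \<and> W \<subseteq> V \<and> V \<subseteq> U" and s: "s \<in> pi0 X W"
  have sb: "s \<noteq> {}" "s \<subseteq> W" "connectedin X s" using pi0_basic a s by blast+
  let ?E = "pi0_map X W V s"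
  have E: "?E \<in> pi0 X V" "s \<subseteq> ?E" using pi0_map_in[of X V s W] a sb by blast+
  have Eb: "?E \<noteq> {}" "?E \<subseteq> V" "connectedin X ?E" using pi0_basic a E(1) by blast+
  let ?D = "pi0_map X V U ?E"
  have D: "?D \<in> pi0 X U" "?E \<subseteq> ?D" using pi0_map_in[of X U ?E V] a Eb by blast+
  then show "pi0_map X V U (pi0_map X W V s) = pi0_map X W U s"
    using pi0_map_eq[OF D(1), of s W] E(2) sb(1) by auto
qed

lemma pi0_coeq:
  assumes lc: "locally_connected_space X" and U: "openin X U"
    and UU: "\<forall>V\<in>\<U>. openin X V" and cov: "\<Union>\<U> = U"
  shows "is_set_coequaliser
          (SIGMA p:\<U> \<times> \<U>. pi0 X (fst p \<inter> snd p))
          (SIGMA V:\<U>. pi0 X V)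
          (\<lambda>(p, s). (fst p, pi0_map X (fst p \<inter> snd p) (fst p) s))
          (\<lambda>(p, s). (snd p, pi0_map X (fst p \<inter> snd p) (snd p) s))
          (pi0 X U)
          (\<lambda>(V, s). pi0_map X V U s)"
    (is "is_set_coequaliser ?A ?B ?f ?g _ ?q")
proof -
  have inA: "?f a \<in> ?B \<and> ?g a \<in> ?B \<and> ?q (?f a) = ?q (?g a)" if a: "a \<in> ?A" for a
  proof -
    obtain V W E where aa: "a = ((V, W), E)" "V \<in> \<U>" "W \<in> \<U>" "E \<in> pi0 X (V \<inter> W)"
      using a by auto
    have VW: "openin X V" "openin X W" "openin X (V \<inter> W)" using UU aa by auto
    have Eb: "E \<noteq> {}" "E \<subseteq> V \<inter> W" "connectedin X E" using pi0_basic VW(3) aa(4) by blast+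
    have EV: "E \<subseteq> V" "E \<subseteq> W" using Eb(2) by blast+
    have f1: "pi0_map X (V \<inter> W) V E \<in> pi0 X V" "E \<subseteq> pi0_map X (V \<inter> W) V E"
      using pi0_map_in[OF VW(1) Eb(3) Eb(1) EV(1)] by blast+
    have g1: "pi0_map X (V \<inter> W) W E \<in> pi0 X W" "E \<subseteq> pi0_map X (V \<inter> W) W E"
      using pi0_map_in[OF VW(2) Eb(3) Eb(1) EV(2)] by blast+
    have VU: "V \<subseteq> U" "W \<subseteq> U" using cov aa by auto
    let ?D = "pi0_map X V U E"
    have EU: "E \<subseteq> U" using EV VU by blast
    have D: "?D \<in> pi0 X U" "E \<subseteq> ?D" using pi0_map_in[OF U Eb(3) Eb(1) EU] by blast+
    have f1b: "pi0_map X (V \<inter> W) V E \<noteq> {}" "pi0_map X (V \<inter> W) V E \<subseteq> V"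
        "connectedin X (pi0_map X (V \<inter> W) V E)" using pi0_basic[OF VW(1) f1(1)] by blast+
    have g1b: "pi0_map X (V \<inter> W) W E \<noteq> {}" "pi0_map X (V \<inter> W) W E \<subseteq> W"
        "connectedin X (pi0_map X (V \<inter> W) W E)" using pi0_basic[OF VW(2) g1(1)] by blast+
    have ne1: "pi0_map X (V \<inter> W) V E \<inter> ?D \<noteq> {}" using f1(2) D(2) Eb(1) by blast
    have ne2: "pi0_map X (V \<inter> W) W E \<inter> ?D \<noteq> {}" using g1(2) D(2) Eb(1) by blast
    have s1: "pi0_map X (V \<inter> W) V E \<subseteq> U" using f1b(2) VU(1) by blast
    have s2: "pi0_map X (V \<inter> W) W E \<subseteq> U" using g1b(2) VU(2) by blast
    have q1: "pi0_map X V U (pi0_map X (V \<inter> W) V E) = ?D"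
      by (rule pi0_map_eq[OF D(1) pi0_max[OF D(1) f1b(3) s1 ne1] f1b(1)])
    have q2: "pi0_map X W U (pi0_map X (V \<inter> W) W E) = ?D"
      by (rule pi0_map_eq[OF D(1) pi0_max[OF D(1) g1b(3) s2 ne2] g1b(1)])
    show ?thesis using aa f1 g1 q1 q2 by auto
  qed
  let ?R = "{(?f a, ?g a) | a. a \<in> ?A} \<union> {(?g a, ?f a) | a. a \<in> ?A}"
  have qR: "?q y = ?q z" if "(y, z) \<in> ?R" for y z
  proof -
    from that obtain a where a: "a \<in> ?A" "(y, z) = (?f a, ?g a) \<or> (y, z) = (?g a, ?f a)"
      by blast
    have "?q (?f a) = ?q (?g a)" by (rule inA[OF a(1), THEN conjunct2, THEN conjunct2])
    then show ?thesis using a(2) by auto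
  qed
  have fwd: "?q x = ?q y" if "(x, y) \<in> ?R\<^sup>*" for x y
    using that
  proof (induction rule: rtrancl_induct)
    case base then show ?case by simp
  next
    case (step y z) then show ?case using qR[of y z] by simp
  qed
  have share: "((W1, E1), (W2, E2)) \<in> ?R"
    if "(W1, E1) \<in> ?B" "(W2, E2) \<in> ?B" "x \<in> E1" "x \<in> E2" for W1 E1 W2 E2 x
  proof -
    have W: "W1 \<in> \<U>" "W2 \<in> \<U>" "E1 \<in> pi0 X W1" "E2 \<in> pi0 X W2" using that by auto
    have Wo: "openin X W1" "openin X W2" "openin X (W1 \<inter> W2)" using UU W by auto
    have E1b: "E1 \<subseteq> W1" using pi0_basic Wo W by blast
    have E2b: "E2 \<subseteq> W2" using pi0_basic Wo W by blast
    let ?F = "connected_component_of_set (subtopology X (W1 \<inter> W2)) x"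
    have F: "?F \<in> pi0 X (W1 \<inter> W2)" "x \<in> ?F" using pi0_exists[OF Wo(3)] that E1b E2b by blast+
    have Fb: "?F \<noteq> {}" "?F \<subseteq> W1 \<inter> W2" "connectedin X ?F" using pi0_basic[OF Wo(3) F(1)] by blast+
    have "?F \<subseteq> E1" using pi0_max[OF W(3) Fb(3)] Fb(2) F(2) that(3) by blast
    then have e1: "pi0_map X (W1 \<inter> W2) W1 ?F = E1" using pi0_map_eq[OF W(3)] Fb(1) by blast
    have "?F \<subseteq> E2" using pi0_max[OF W(4) Fb(3)] Fb(2) F(2) that(4) by blast
    then have e2: "pi0_map X (W1 \<inter> W2) W2 ?F = E2" using pi0_map_eq[OF W(4)] Fb(1) by blast
    have "((W1, W2), ?F) \<in> ?A" using W F by auto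
    then have "(?f ((W1, W2), ?F), ?g ((W1, W2), ?F)) \<in> ?R" by blast
    then show ?thesis using e1 e2 by simp
  qed
  have bwd: "(b, b') \<in> ?R\<^sup>*" if b: "b \<in> ?B" "b' \<in> ?B" "?q b = ?q b'" for b b'
  proof -
    obtain V C where bb: "b = (V, C)" "V \<in> \<U>" "C \<in> pi0 X V" using b by auto
    obtain V' C' where bb': "b' = (V', C')" "V' \<in> \<U>" "C' \<in> pi0 X V'" using b by auto
    have Vo: "openin X V" "openin X V'" using UU bb bb' by auto
    have VU: "V \<subseteq> U" "V' \<subseteq> U" using cov bb bb' by auto
    have Cb: "C \<noteq> {}" "C \<subseteq> V" "connectedin X C" using pi0_basic[OF Vo(1) bb(3)] by blast+
    have C'b: "C' \<noteq> {}" "C' \<subseteq> V'" "connectedin X C'" using pi0_basic[OF Vo(2) bb'(3)] by blast+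
    let ?D = "pi0_map X V U C"
    have CU: "C \<subseteq> U" "C' \<subseteq> U" using Cb(2) C'b(2) VU by blast+
    have D: "?D \<in> pi0 X U" "C \<subseteq> ?D" using pi0_map_in[OF U Cb(3) Cb(1) CU(1)] by blast+
    have eqD: "pi0_map X V' U C' = ?D" using b(3) bb bb' by simp
    have "C' \<subseteq> pi0_map X V' U C'" using pi0_map_in[OF U C'b(3) C'b(1) CU(2)] by blast
    then have C'D: "C' \<subseteq> ?D" using eqD by simp
    have Db: "connectedin X ?D" "?D \<subseteq> U" using pi0_basic[OF U D(1)] by blast+
    define S where "S = ?D \<inter> \<Union>{E. \<exists>W. (W, E) \<in> ?B \<and> (b, (W, E)) \<in> ?R\<^sup>*}"
    define T where "T = ?D \<inter> \<Union>{E. \<exists>W. (W, E) \<in> ?B \<and> (b, (W, E)) \<notin> ?R\<^sup>*}"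
    have Do: "openin X ?D" using pi0_open[OF lc U D(1)] .
    have Eo: "openin X E" if "(W, E) \<in> ?B" for W E using that pi0_open[OF lc] UU by auto
    have So: "openin X S" unfolding S_def using Do Eo by (intro openin_Int openin_Union) auto
    have To: "openin X T" unfolding T_def using Do Eo by (intro openin_Int openin_Union) auto
    have cover: "?D \<subseteq> S \<union> T"
    proof
      fix x assume x: "x \<in> ?D"
      then have "x \<in> U" using Db by blast
      then obtain W where W: "W \<in> \<U>" "x \<in> W" using cov by blast
      have Wo: "openin X W" using UU W by auto
      let ?E = "connected_component_of_set (subtopology X W) x"
      have "?E \<in> pi0 X W" "x \<in> ?E" using pi0_exists[OF Wo W(2)] by blast+
      then have "(W, ?E) \<in> ?B" using W by auto
      then show "x \<in> S \<union> T" unfolding S_def T_def using x \<open>x \<in> ?E\<close> by blast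
    qed
    have disj: "S \<inter> T \<inter> ?D = {}"
    proof (rule ccontr)
      assume "S \<inter> T \<inter> ?D \<noteq> {}"
      then obtain x W1 E1 W2 E2 where "(W1, E1) \<in> ?B" "(b, (W1, E1)) \<in> ?R\<^sup>*" "x \<in> E1"
        "(W2, E2) \<in> ?B" "(b, (W2, E2)) \<notin> ?R\<^sup>*" "x \<in> E2"
        unfolding S_def T_def by blast
      then show False using share[of W1 E1 W2 E2 x] by (meson rtrancl.rtrancl_into_rtrancl)
    qed
    obtain x0 where x0: "x0 \<in> C" using Cb by blast
    have SD: "S \<inter> ?D \<noteq> {}" unfolding S_def using x0 D(2) b(1) bb by blast
    have "T \<inter> ?D = {}"
      using connectedinD[OF Db(1) So To cover disj] SD by blast
    then have "?D \<subseteq> S" using cover by blast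
    obtain x1 where x1: "x1 \<in> C'" using C'b by blast
    then have "x1 \<in> S" using C'D \<open>?D \<subseteq> S\<close> by blast
    then obtain W E where WE: "(W, E) \<in> ?B" "(b, (W, E)) \<in> ?R\<^sup>*" "x1 \<in> E" unfolding S_def by blast
    have "((W, E), (V', C')) \<in> ?R" using share[OF WE(1) _ WE(3) x1] b(2) bb' by simp
    then show ?thesis using WE(2) bb' by (meson rtrancl.rtrancl_into_rtrancl)
  qed
  have surj: "?q ` ?B = pi0 X U"
  proof
    show "?q ` ?B \<subseteq> pi0 X U"
    proof (rule subsetI)
      fix y assume "y \<in> ?q ` ?B"
      then obtain V C where VC: "(V, C) \<in> ?B" "y = ?q (V, C)" by blast
      then have yy: "y = pi0_map X V U C" by simp
      from VC have "V \<in> \<U>" "C \<in> pi0 X V" by auto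
      moreover then have "openin X V" "V \<subseteq> U" using UU cov by auto
      ultimately have "C \<noteq> {}" "C \<subseteq> U" "connectedin X C" using pi0_basic[of X V C] by blast+
      then show "y \<in> pi0 X U" unfolding yy
        using pi0_map_in[OF U \<open>connectedin X C\<close> \<open>C \<noteq> {}\<close> \<open>C \<subseteq> U\<close>, of V] by simp
    qed
  next
    show "pi0 X U \<subseteq> ?q ` ?B"
    proof
      fix D assume D: "D \<in> pi0 X U"
      then obtain x where x: "x \<in> D" using pi0_basic U by blast
      then have "x \<in> U" using pi0_basic U D by blast
      then obtain W where W: "W \<in> \<U>" "x \<in> W" using cov by blast
      have Wo: "openin X W" using UU W by auto
      let ?E = "connected_component_of_set (subtopology X W) x"
      have E: "?E \<in> pi0 X W" "x \<in> ?E" using pi0_exists[OF Wo W(2)] by blast+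
      have Eb: "?E \<noteq> {}" "?E \<subseteq> W" "connectedin X ?E" using pi0_basic[OF Wo E(1)] by blast+
      have "?E \<subseteq> D" using pi0_max[OF D Eb(3)] Eb(2) W cov E(2) x by blast
      then have "?q (W, ?E) = D" using pi0_map_eq[OF D] Eb(1) by simp
      moreover have "(W, ?E) \<in> ?B" using W E by auto
      ultimately show "D \<in> ?q ` ?B" by force
    qed
  qed
  show ?thesis unfolding is_set_coequaliser_def
  proof (intro conjI ballI)
    show "?f \<in> ?A \<rightarrow> ?B" by (rule Pi_I, rule inA[THEN conjunct1])
    show "?g \<in> ?A \<rightarrow> ?B" by (rule Pi_I, rule inA[THEN conjunct2, THEN conjunct1])
    show "?q ` ?B = pi0 X U" by (rule surj)
    fix b b' assume "b \<in> ?B" "b' \<in> ?B"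
    then show "(?q b = ?q b') = ((b, b') \<in> ?R\<^sup>*)"
    proof (intro iffI)
      assume "b \<in> ?B" "b' \<in> ?B" "?q b = ?q b'"
      then show "(b, b') \<in> ?R\<^sup>*" by (rule bwd)
    next
      assume "(b, b') \<in> ?R\<^sup>*"
      then show "?q b = ?q b'" by (rule fwd)
    qed
  qed
qed



lemma cosheaf_copre: "is_cosheaf X G Gm \<Longrightarrow> copresheaf_on X G Gm"
  unfolding is_cosheaf_def by (rule conjunct1)

lemma cosheafD:
  assumes "is_cosheaf X G Gm" "openin X U" "\<forall>V\<in>\<U>. openin X V" "\<Union>\<U> = U"
  shows "is_set_coequaliser
          (SIGMA p:\<U> \<times> \<U>. G (fst p \<inter> snd p))
          (SIGMA V:\<U>. G V)
          (\<lambda>(p, s). (fst p, Gm (fst p \<inter> snd p) (fst p) s))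
          (\<lambda>(p, s). (snd p, Gm (fst p \<inter> snd p) (snd p) s))
          (G U)
          (\<lambda>(V, s). Gm V U s)"
proof -
  from assms(1) have H: "\<forall>U \<U>. openin X U \<and> (\<forall>V\<in>\<U>. openin X V) \<and> \<Union>\<U> = U \<longrightarrow>
        is_set_coequaliser
          (SIGMA p:\<U> \<times> \<U>. G (fst p \<inter> snd p))
          (SIGMA V:\<U>. G V)
          (\<lambda>(p, s). (fst p, Gm (fst p \<inter> snd p) (fst p) s))
          (\<lambda>(p, s). (snd p, Gm (fst p \<inter> snd p) (snd p) s))
          (G U)
          (\<lambda>(V, s). Gm V U s)"
    unfolding is_cosheaf_def by (rule conjunct2)
  show ?thesis
    by (rule H[rule_format, OF conjI[OF assms(2) conjI[OF assms(3) assms(4)]]])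
qed

lemma coeq_surj: "is_set_coequaliser A B f g C q \<Longrightarrow> q ` B = C"
  unfolding is_set_coequaliser_def by blast

lemma coeq_rel: "is_set_coequaliser A B f g C q \<Longrightarrow> b \<in> B \<Longrightarrow> b' \<in> B \<Longrightarrow> q b = q b' \<Longrightarrow>
   (b, b') \<in> ({(f a, g a) | a. a \<in> A} \<union> {(g a, f a) | a. a \<in> A})\<^sup>*"
  unfolding is_set_coequaliser_def by blast

lemma cosheaf_empty: assumes "is_cosheaf X G Gm" shows "G {} = {}"
proof -
  have "\<forall>V\<in>{}. openin X V" by simp
  from coeq_surj[OF cosheafD[OF assms openin_empty this Union_empty]]
  show ?thesis by simp
qed

lemma Union_pi0: "openin X U \<Longrightarrow> \<Union>(pi0 X U) = U"
  unfolding pi0_def Union_connected_components_of using openin_subset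
  by (metis inf.absorb_iff2 topspace_subtopology)

lemma decomp:
  assumes lc: "locally_connected_space X" and G: "is_cosheaf X G Gm"
    and U: "openin X U" and s: "s \<in> G U"
  shows "\<exists>!D. D \<in> pi0 X U \<and> (\<exists>t\<in>G D. Gm D U t = s)"
proof -
  let ?A = "SIGMA p:pi0 X U \<times> pi0 X U. G (fst p \<inter> snd p)"
  let ?B = "SIGMA V:pi0 X U. G V"
  let ?f = "\<lambda>(p, s). (fst p, Gm (fst p \<inter> snd p) (fst p) s)"
  let ?g = "\<lambda>(p, s). (snd p, Gm (fst p \<inter> snd p) (snd p) s)"
  let ?q = "\<lambda>(V, s). Gm V U s"
  have op: "\<forall>V\<in>pi0 X U. openin X V" using pi0_open[OF lc U] by blast
  have co: "is_set_coequaliser ?A ?B ?f ?g (G U) ?q"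
    by (rule cosheafD[OF G U op Union_pi0[OF U]])
  have G0: "G {} = {}" using cosheaf_empty G by blast
  have "s \<in> ?q ` ?B" using s coeq_surj[OF co] by simp
  then obtain p where p: "p \<in> ?B" "s = ?q p" by (rule imageE)
  obtain D t where Dt: "p = (D, t)" by (cases p)
  have D: "D \<in> pi0 X U" "t \<in> G D" "Gm D U t = s" using p Dt by auto
  show ?thesis
  proof (rule ex1I[of _ D])
    show "D \<in> pi0 X U \<and> (\<exists>t\<in>G D. Gm D U t = s)" using D by blast
    fix D' assume "D' \<in> pi0 X U \<and> (\<exists>t\<in>G D'. Gm D' U t = s)"
    then obtain t' where D': "D' \<in> pi0 X U" "t' \<in> G D'" "Gm D' U t' = s" by blast
    let ?R = "{(?f a, ?g a) | a. a \<in> ?A} \<union> {(?g a, ?f a) | a. a \<in> ?A}"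
    have m1: "(D', t') \<in> ?B" "(D, t) \<in> ?B" using D D' by auto
    have "?q (D', t') = ?q (D, t)" using D D' by simp
    from coeq_rel[OF co m1 this] have rel: "((D', t'), (D, t)) \<in> ?R\<^sup>*" .
    have R: "fst x = fst y" if "(x, y) \<in> ?R" for x y
    proof -
      from that obtain a where a: "a \<in> ?A" "(x, y) = (?f a, ?g a) \<or> (x, y) = (?g a, ?f a)"
        by blast
      obtain C1 C2 z where az: "a = ((C1, C2), z)" by (metis prod.exhaust)
      have C: "C1 \<in> pi0 X U" "C2 \<in> pi0 X U" "z \<in> G (C1 \<inter> C2)" using a(1) az by auto
      have "C1 \<inter> C2 \<noteq> {}" using C(3) G0 by auto
      then have "C1 = C2" using connected_components_of_overlap C(1,2) unfolding pi0_def by blast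
      then show "fst x = fst y" using a(2) az by auto
    qed
    have "fst p = D'" if "((D', t'), p) \<in> ?R\<^sup>*" for p
      using that
    proof (induction rule: rtrancl_induct)
      case base then show ?case by simp
    next
      case (step y z) then show ?case using R[of y z] by simp
    qed
    from this[OF rel] show "D' = D" by simp
  qed
qed



lemma copre_map: "copresheaf_on X G Gm \<Longrightarrow> openin X U \<Longrightarrow> openin X V \<Longrightarrow> V \<subseteq> U \<Longrightarrow> t \<in> G V \<Longrightarrow> Gm V U t \<in> G U"
  unfolding copresheaf_on_def by (meson Pi_mem)

lemma copre_comp: "copresheaf_on X G Gm \<Longrightarrow> openin X U \<Longrightarrow> openin X V \<Longrightarrow> openin X W \<Longrightarrow> W \<subseteq> V \<Longrightarrow> V \<subseteq> U
   \<Longrightarrow> s \<in> G W \<Longrightarrow> Gm V U (Gm W V s) = Gm W U s"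
  unfolding copresheaf_on_def by meson

lemma ntD1: "nat_trans_on X G Gm H Hm \<eta> \<Longrightarrow> openin X U \<Longrightarrow> s \<in> G U \<Longrightarrow> \<eta> U s \<in> H U"
  unfolding nat_trans_on_def by (meson Pi_mem)

lemma ntD2: "nat_trans_on X G Gm H Hm \<eta> \<Longrightarrow> openin X U \<Longrightarrow> openin X V \<Longrightarrow> V \<subseteq> U \<Longrightarrow> s \<in> G V
   \<Longrightarrow> \<eta> U (Gm V U s) = Hm V U (\<eta> V s)"
  unfolding nat_trans_on_def by meson

lemma terminal_part:
  assumes lc: "locally_connected_space X" and G: "is_cosheaf X G Gm"
  shows "\<exists>\<eta>. nat_trans_on X G Gm (pi0 X) (pi0_map X) \<eta> \<and>
          (\<forall>\<eta>'. nat_trans_on X G Gm (pi0 X) (pi0_map X) \<eta>' \<longrightarrow>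
             (\<forall>U. openin X U \<longrightarrow> (\<forall>s\<in>G U. \<eta>' U s = \<eta> U s)))"
proof -
  have cp: "copresheaf_on X G Gm" using G cosheaf_copre by blast
  define \<eta> where "\<eta> U s = (THE D. D \<in> pi0 X U \<and> (\<exists>t\<in>G D. Gm D U t = s))" for U s
  have eta1: "\<eta> U s \<in> pi0 X U \<and> (\<exists>t\<in>G (\<eta> U s). Gm (\<eta> U s) U t = s)" if "openin X U" "s \<in> G U" for U s
    unfolding \<eta>_def using theI'[OF decomp[OF lc G that]] .
  have eta2: "\<eta> U (Gm D U t) = D" if U: "openin X U" and D: "D \<in> pi0 X U" and t: "t \<in> G D" for U D t
  proof -
    have "Gm D U t \<in> G U" using copre_map[OF cp U pi0_open[OF lc U D]] pi0_basic[OF U D] t by blast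
    show ?thesis unfolding \<eta>_def
      by (rule the1_equality[OF decomp[OF lc G U \<open>Gm D U t \<in> G U\<close>]]) (use D t in blast)
  qed
  have eta3: "\<eta> U (Gm C U t) = pi0_map X V U C"
    if U: "openin X U" and C: "openin X C" "connectedin X C" "C \<noteq> {}" "C \<subseteq> U" and t: "t \<in> G C" for U C t V
  proof -
    let ?D = "pi0_map X V U C"
    have D: "?D \<in> pi0 X U" "C \<subseteq> ?D" using pi0_map_in[OF U C(2,3,4)] by blast+
    have Do: "openin X ?D" using pi0_open[OF lc U D(1)] .
    have DU: "?D \<subseteq> U" using pi0_basic[OF U D(1)] by blast
    have "Gm C U t = Gm ?D U (Gm C ?D t)"
      using copre_comp[OF cp U Do C(1) D(2) DU t] by simp
    moreover have "Gm C ?D t \<in> G ?D" using copre_map[OF cp Do C(1) D(2) t] .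
    ultimately show ?thesis using eta2[OF U D(1)] by simp
  qed
  have nat: "nat_trans_on X G Gm (pi0 X) (pi0_map X) \<eta>"
    unfolding nat_trans_on_def
  proof (intro conjI allI impI ballI Pi_I)
    fix U s assume "openin X U" "s \<in> G U"
    from eta1[OF this] show "\<eta> U s \<in> pi0 X U" by (rule conjunct1)
  next
    fix U V s assume UV: "openin X U \<and> openin X V \<and> V \<subseteq> U" and s: "s \<in> G V"
    have U: "openin X U" and V: "openin X V" and VU: "V \<subseteq> U" using UV by simp_all
    let ?D = "\<eta> V s"
    have D: "?D \<in> pi0 X V" using eta1[OF V s] by (rule conjunct1)
    obtain t where t: "t \<in> G ?D" "Gm ?D V t = s" using eta1[OF V s] by blast
    have Do: "openin X ?D" using pi0_open[OF lc V D] .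
    have Db: "?D \<noteq> {}" "?D \<subseteq> V" "connectedin X ?D" using pi0_basic[OF V D] by simp_all
    have DU: "?D \<subseteq> U" using Db(2) VU by (rule subset_trans)
    have "Gm V U (Gm ?D V t) = Gm ?D U t" by (rule copre_comp[OF cp U V Do Db(2) VU t(1)])
    then have e: "Gm V U s = Gm ?D U t" using t(2) by simp
    have "\<eta> U (Gm ?D U t) = pi0_map X V U ?D" by (rule eta3[OF U Do Db(3) Db(1) DU t(1)])
    then show "\<eta> U (Gm V U s) = pi0_map X V U (\<eta> V s)" using e by simp
  qed
  show ?thesis
  proof (intro exI conjI allI impI ballI)
    show "nat_trans_on X G Gm (pi0 X) (pi0_map X) \<eta>" by (rule nat)
    fix \<eta>' U s assume n': "nat_trans_on X G Gm (pi0 X) (pi0_map X) \<eta>'" and U: "openin X U" and s: "s \<in> G U"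
    let ?D = "\<eta> U s"
    have D: "?D \<in> pi0 X U" using eta1[OF U s] by (rule conjunct1)
    obtain t where t: "t \<in> G ?D" "Gm ?D U t = s" using eta1[OF U s] by blast
    have Do: "openin X ?D" using pi0_open[OF lc U D] .
    have Db: "?D \<noteq> {}" "?D \<subseteq> U" "connectedin X ?D" using pi0_basic[OF U D] by simp_all
    have "\<eta>' ?D t \<in> pi0 X ?D" by (rule ntD1[OF n' Do t(1)])
    then have e: "\<eta>' ?D t = ?D" using pi0_self[OF Db(3) Db(1)] by simp
    have "\<eta>' U (Gm ?D U t) = pi0_map X ?D U (\<eta>' ?D t)" by (rule ntD2[OF n' U Do Db(2) t(1)])
    also have "\<dots> = ?D" using e pi0_map_eq[OF D subset_refl Db(1)] by simp
    finally show "\<eta>' U s = \<eta> U s" using t(2) by simp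
  qed
qed


theorem corollary2p5:
  fixes X :: "'a topology"
  assumes "locally_connected_space X"
  shows "is_cosheaf X (pi0 X) (pi0_map X) \<and>
    (\<forall>(G :: 'a set \<Rightarrow> 'b set) Gm. is_cosheaf X G Gm \<longrightarrow>
       (\<exists>\<eta>. nat_trans_on X G Gm (pi0 X) (pi0_map X) \<eta> \<and>
          (\<forall>\<eta>'. nat_trans_on X G Gm (pi0 X) (pi0_map X) \<eta>' \<longrightarrow>
             (\<forall>U. openin X U \<longrightarrow> (\<forall>s\<in>G U. \<eta>' U s = \<eta> U s)))))"
proof (intro conjI allI impI)
  show "is_cosheaf X (pi0 X) (pi0_map X)"
    unfolding is_cosheaf_def
  proof (intro conjI allI impI)
    show "copresheaf_on X (pi0 X) (pi0_map X)" by (rule pi0_copre)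
    fix U :: "'a set" and \<U> :: "'a set set"
    assume H: "openin X U \<and> (\<forall>V\<in>\<U>. openin X V) \<and> \<Union>\<U> = U"
    have U: "openin X U" and UU: "\<forall>V\<in>\<U>. openin X V" and cov: "\<Union>\<U> = U" using H by simp_all
    show "is_set_coequaliser
          (SIGMA p:\<U> \<times> \<U>. pi0 X (fst p \<inter> snd p))
          (SIGMA V:\<U>. pi0 X V)
          (\<lambda>(p, s). (fst p, pi0_map X (fst p \<inter> snd p) (fst p) s))
          (\<lambda>(p, s). (snd p, pi0_map X (fst p \<inter> snd p) (snd p) s))
          (pi0 X U)
          (\<lambda>(V, s). pi0_map X V U s)"
      by (rule pi0_coeq[OF assms U UU cov])
  qed
next
  fix G :: "'a set \<Rightarrow> 'b set" and Gm
  assume "is_cosheaf X G Gm"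
  then show "\<exists>\<eta>. nat_trans_on X G Gm (pi0 X) (pi0_map X) \<eta> \<and>
          (\<forall>\<eta>'. nat_trans_on X G Gm (pi0 X) (pi0_map X) \<eta>' \<longrightarrow>
             (\<forall>U. openin X U \<longrightarrow> (\<forall>s\<in>G U. \<eta>' U s = \<eta> U s)))"
    by (rule terminal_part[OF assms])
qed

end
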